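(* Let $n,m,k$ be even with $n=m+k$, let $h:\mathbb F_2^m\to\mathbb F_2$ and $g:\mathbb F_2^k\to\mathbb F_2$ be bent functions, let $H\subset\mathbb F_2^m$ be a linear subspace of codimension $1$, and $\overline H=\mathbb F_2^m\setminus H$. Let $E_1=\mathbb F_2^k\times H$ and $E_2=\{\mathbf 0_k\}\times\overline H$. Define $W:\mathbb F_2^k\times\mathbb F_2^m\to\mathbb Z$ by $W(\alpha,\beta)=(-1)^{g(\alpha)\oplus h(\beta)}2^{n/2}$ for $(\alpha,\beta)\in E_1$, $W(\alpha,\beta)=(-1)^{h(\beta)}2^{m/2+k}$ for $(\alpha,\beta)\in E_2$, and $W(\alpha,\beta)=0$ otherwise. Then $W$ is the Walsh spectrum of a Boolean function $f:\mathbb F_2^n\to\mathbb F_2$. Moreover, the functions $f_1:E_1\to\mathbb F_2$, $f_1(\alpha,\beta)=g(\alpha)\oplus h(\beta)$, and $f_2:E_2\to\mathbb F_2$, $f_2(\alpha,\beta)=h(\beta)$, are totally disjoint spectra functions.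
   Context: $W_f(\omega)=\sum_x(-1)^{f(x)\oplus\omega\cdot x}$; for even $m$, $h$ is bent if $|W_h(\omega)|=2^{m/2}$ for all $\omega$. Totally disjoint spectra functions: for disjoint $S^{[1]},S^{[2]}\subset\mathbb F_2^n$ and functions $f_i:S^{[i]}\to\mathbb F_2$, put $X_i(u)=\sum_{\omega\in S^{[i]}}(-1)^{f_i(\omega)\oplus u\cdot\omega}$; the pair is totally disjoint spectra if $X_1(u)X_2(u)=0$ and $|X_1(u)|+|X_2(u)|>0$ for all $u\in\mathbb F_2^n$. *)

theory Defs
  imports Main
begin

text \<open>Vectors of F_2^n are Boolean lists of length n; addition is XOR, F_2 values are bool.
  A pair (alpha, beta) in F_2^k x F_2^m is identified with the concatenation alpha @ beta in F_2^(k+m).\<close>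

definition vecs :: "nat \<Rightarrow> bool list set" where
  "vecs n = {xs. length xs = n}"

definition vadd :: "bool list \<Rightarrow> bool list \<Rightarrow> bool list" where
  "vadd xs ys = map2 (\<noteq>) xs ys"

definition dotp :: "bool list \<Rightarrow> bool list \<Rightarrow> bool" where
  "dotp xs ys = odd (length (filter id (map2 (\<and>) xs ys)))"

definition sgn2 :: "bool \<Rightarrow> int" where
  "sgn2 b = (if b then -1 else 1)"

definition walsh :: "nat \<Rightarrow> (bool list \<Rightarrow> bool) \<Rightarrow> bool list \<Rightarrow> int" where
  "walsh n f \<omega> = (\<Sum>x\<in>vecs n. sgn2 (f x \<noteq> dotp \<omega> x))"

definition bent :: "nat \<Rightarrow> (bool list \<Rightarrow> bool) \<Rightarrow> bool" where
  "bent m h \<longleftrightarrow> (\<forall>\<omega>\<in>vecs m. \<bar>walsh m h \<omega>\<bar> = 2 ^ (m div 2))"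

definition lin_subspace :: "nat \<Rightarrow> bool list set \<Rightarrow> bool" where
  "lin_subspace m H \<longleftrightarrow> H \<subseteq> vecs m \<and> replicate m False \<in> H \<and>
     (\<forall>x\<in>H. \<forall>y\<in>H. vadd x y \<in> H)"

definition codim1_subspace :: "nat \<Rightarrow> bool list set \<Rightarrow> bool" where
  "codim1_subspace m H \<longleftrightarrow> lin_subspace m H \<and> m \<ge> 1 \<and> card H = 2 ^ (m - 1)"

definition Xsum :: "bool list set \<Rightarrow> (bool list \<Rightarrow> bool) \<Rightarrow> bool list \<Rightarrow> int" where
  "Xsum S f u = (\<Sum>\<omega>\<in>S. sgn2 (f \<omega> \<noteq> dotp u \<omega>))"

definition tds :: "nat \<Rightarrow> bool list set \<Rightarrow> (bool list \<Rightarrow> bool) \<Rightarrow> bool list set \<Rightarrow> (bool list \<Rightarrow> bool) \<Rightarrow> bool" where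
  "tds n S1 f1 S2 f2 \<longleftrightarrow> S1 \<subseteq> vecs n \<and> S2 \<subseteq> vecs n \<and> S1 \<inter> S2 = {} \<and>
     (\<forall>u\<in>vecs n. Xsum S1 f1 u * Xsum S2 f2 u = 0 \<and> \<bar>Xsum S1 f1 u\<bar> + \<bar>Xsum S2 f2 u\<bar> > 0)"

end

theory Submission
  imports Defs
begin


lemma sgn2_xor: "sgn2 (a \<noteq> b) = sgn2 a * sgn2 b" by (simp add: sgn2_def)
lemma sgn2_sq: "sgn2 a * sgn2 a = 1" by (simp add: sgn2_def)
lemma mem_vecs[simp]: "x \<in> vecs n \<longleftrightarrow> length x = n" by (simp add: vecs_def)

lemma dotp_Nil1[simp]: "dotp [] y = False" by (simp add: dotp_def)
lemma dotp_Nil2[simp]: "dotp x [] = False" by (simp add: dotp_def)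
lemma dotp_Cons[simp]: "dotp (a#x) (b#y) = ((a \<and> b) \<noteq> dotp x y)" by (cases "a \<and> b") (auto simp add: dotp_def)
lemma vadd_Nil1[simp]: "vadd [] y = []" by (simp add: vadd_def)
lemma vadd_Nil2[simp]: "vadd x [] = []" by (simp add: vadd_def)
lemma vadd_Cons[simp]: "vadd (a#x) (b#y) = (a \<noteq> b) # vadd x y" by (simp add: vadd_def)
lemma length_vadd[simp]: "length (vadd x y) = min (length x) (length y)" by (simp add: vadd_def)

lemma dotp_comm: "dotp x y = dotp y x"
  apply (induction x arbitrary: y)
   apply simp
  subgoal for a x y by (cases y) auto
  done

lemma dotp_append: "length a = length \<alpha> \<Longrightarrow> dotp (\<alpha>@\<beta>) (a@b) = (dotp \<alpha> a \<noteq> dotp \<beta> b)"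
  by (induction \<alpha> arbitrary: a) (auto simp: length_Suc_conv)

lemma dotp_vadd: "length x = length y \<Longrightarrow> dotp (vadd x y) z = (dotp x z \<noteq> dotp y z)"
  apply (induction x arbitrary: y z)
   apply simp
  subgoal for a x y z by (cases y; cases z) auto
  done

lemma dotp_zero1[simp]: "dotp (replicate n False) z = False"
  apply (induction n arbitrary: z)
   apply simp
  subgoal for n z by (cases z) auto
  done
lemma dotp_zero2[simp]: "dotp z (replicate n False) = False"
  using dotp_zero1 dotp_comm by metis

lemma vadd_cancel: "length x = length y \<Longrightarrow> vadd x (vadd x y) = y"
  apply (induction x arbitrary: y)
   apply simp
  subgoal for a x y by (cases y) auto
  done
lemma vadd_comm: "vadd x y = vadd y x"
  apply (induction x arbitrary: y)
   apply simp
  subgoal for a x y by (cases y) auto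
  done
lemma vadd_zero: "length x = n \<Longrightarrow> vadd (replicate n False) x = x"
  by (induction x arbitrary: n) auto
lemma vadd_eq_zero: "length x = length y \<Longrightarrow> (vadd x y = replicate (length x) False) = (x = y)"
  apply (induction x arbitrary: y)
   apply simp
  subgoal for a x y by (cases y) auto
  done

lemma vecs_0: "vecs 0 = {[]}" by (auto simp: vecs_def)
lemma vecs_Suc: "vecs (Suc n) = (\<lambda>x. False#x) ` vecs n \<union> (\<lambda>x. True#x) ` vecs n"
  by (auto simp: vecs_def length_Suc_conv image_def)
lemma finite_vecs[simp]: "finite (vecs n)"
  by (induction n) (auto simp: vecs_0 vecs_Suc)
lemma sum_vecs_Suc: "sum f (vecs (Suc n)) = (\<Sum>x\<in>vecs n. f (False#x)) + (\<Sum>x\<in>vecs n. f (True#x))"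
  unfolding vecs_Suc
  by (subst sum.union_disjoint) (auto simp: sum.reindex inj_on_def)
lemma card_vecs: "card (vecs n) = 2^n"
proof (induction n)
  case 0 then show ?case by (simp add: vecs_0)
next
  case (Suc n)
  have "card (vecs (Suc n)) = (\<Sum>x\<in>vecs (Suc n). 1)" by simp
  also have "\<dots> = 2 * card (vecs n)" by (subst sum_vecs_Suc) simp
  finally show ?case using Suc by simp
qed

lemma vecs_append: "vecs (k+m) = (\<lambda>(a,b). a@b) ` (vecs k \<times> vecs m)"
proof
  show "vecs (k+m) \<subseteq> (\<lambda>(a,b). a@b) ` (vecs k \<times> vecs m)"
  proof
    fix x assume "x \<in> vecs (k+m)"
    then show "x \<in> (\<lambda>(a,b). a@b) ` (vecs k \<times> vecs m)"
      by (intro image_eqI[of _ _ "(take k x, drop k x)"]) auto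
  qed
qed auto

lemma inj_append: "inj_on (\<lambda>(a,b). a@b) (vecs k \<times> B)"
  by (auto simp: inj_on_def)

lemma sum_vecs_append: "sum f (vecs (k+m)) = (\<Sum>a\<in>vecs k. \<Sum>b\<in>vecs m. f (a@b))"
  unfolding vecs_append
  by (subst sum.reindex[OF inj_append]) (simp add: sum.cartesian_product split_def)

lemma orth: "\<omega> \<in> vecs n \<Longrightarrow> (\<Sum>x\<in>vecs n. sgn2 (dotp \<omega> x)) = (if \<omega> = replicate n False then 2^n else 0)"
proof (induction n arbitrary: \<omega>)
  case 0 then show ?case by (simp add: vecs_0 sgn2_def)
next
  case (Suc n)
  then obtain a w where w: "\<omega> = a # w" "w \<in> vecs n" by (auto simp: length_Suc_conv)
  have "(\<Sum>x\<in>vecs (Suc n). sgn2 (dotp \<omega> x)) = (\<Sum>x\<in>vecs n. sgn2 (dotp w x)) + (\<Sum>x\<in>vecs n. sgn2 (a \<noteq> dotp w x))"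
    by (subst sum_vecs_Suc) (simp add: w)
  also have "\<dots> = (\<Sum>x\<in>vecs n. sgn2 (dotp w x)) + (\<Sum>x\<in>vecs n. sgn2 a * sgn2 (dotp w x))"
    by (simp only: sgn2_xor)
  also have "\<dots> = (\<Sum>x\<in>vecs n. sgn2 (dotp w x)) * (1 + sgn2 a)"
    by (simp add: sum_distrib_left[symmetric] algebra_simps)
  finally show ?case using Suc.IH[OF w(2)] w by (auto simp: sgn2_def)
qed



lemma walsh_inversion:
  assumes inv: "\<And>x. x \<in> vecs n \<Longrightarrow> (\<Sum>\<nu>\<in>vecs n. F \<nu> * sgn2 (dotp \<nu> x)) = 2^n * sgn2 (f x)"
    and w: "\<omega> \<in> vecs n"
  shows "walsh n f \<omega> = F \<omega>"
proof -
  have "2^n * walsh n f \<omega> = (\<Sum>x\<in>vecs n. 2^n * sgn2 (f x) * sgn2 (dotp \<omega> x))"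
    unfolding walsh_def sgn2_xor by (simp add: sum_distrib_left mult.assoc)
  also have "\<dots> = (\<Sum>x\<in>vecs n. \<Sum>\<nu>\<in>vecs n. F \<nu> * (sgn2 (dotp \<nu> x) * sgn2 (dotp \<omega> x)))"
  proof (rule sum.cong[OF refl])
    fix x assume x: "x \<in> vecs n"
    have "2^n * sgn2 (f x) * sgn2 (dotp \<omega> x) = (\<Sum>\<nu>\<in>vecs n. F \<nu> * sgn2 (dotp \<nu> x)) * sgn2 (dotp \<omega> x)"
      using inv[OF x] by simp
    then show "2^n * sgn2 (f x) * sgn2 (dotp \<omega> x) = (\<Sum>\<nu>\<in>vecs n. F \<nu> * (sgn2 (dotp \<nu> x) * sgn2 (dotp \<omega> x)))"
      by (simp add: sum_distrib_right mult.assoc)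
  qed
  also have "\<dots> = (\<Sum>\<nu>\<in>vecs n. F \<nu> * (\<Sum>x\<in>vecs n. sgn2 (dotp (vadd \<nu> \<omega>) x)))"
    apply (subst sum.swap)
    apply (rule sum.cong[OF refl])
    apply (simp only: sum_distrib_left)
    apply (rule sum.cong[OF refl])
    subgoal for \<nu> x
    proof -
      assume "\<nu> \<in> vecs n"
      then have "length \<nu> = length \<omega>" using w by simp
      then have "dotp (vadd \<nu> \<omega>) x = (dotp \<nu> x \<noteq> dotp \<omega> x)" by (rule dotp_vadd)
      then show ?thesis by (simp only: sgn2_xor)
    qed
    done
  also have "\<dots> = (\<Sum>\<nu>\<in>vecs n. if \<nu> = \<omega> then F \<nu> * 2^n else 0)"
  proof (rule sum.cong[OF refl])
    fix \<nu> assume nu: "\<nu> \<in> vecs n"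
    then have e: "(vadd \<nu> \<omega> = replicate n False) = (\<nu> = \<omega>)"
      using w vadd_eq_zero[of \<nu> \<omega>] by simp
    have "vadd \<nu> \<omega> \<in> vecs n" using nu w by simp
    then show "F \<nu> * (\<Sum>x\<in>vecs n. sgn2 (dotp (vadd \<nu> \<omega>) x)) = (if \<nu> = \<omega> then F \<nu> * 2^n else 0)"
      by (simp only: orth e) simp
  qed
  also have "\<dots> = F \<omega> * 2^n" using w by simp
  finally show ?thesis by simp
qed

lemma char_exists:
  "(\<forall>x\<in>vecs m. \<forall>y\<in>vecs m. P (vadd x y) = (P x \<noteq> P y)) \<Longrightarrow> \<exists>c\<in>vecs m. \<forall>x\<in>vecs m. P x = dotp c x"
proof (induction m arbitrary: P)
  case 0
  then have "P [] = (P [] \<noteq> P [])" by (auto simp: vecs_0)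
  then show ?case by (auto simp: vecs_0)
next
  case (Suc m)
  define Q where "Q x = P (False # x)" for x
  have "\<forall>x\<in>vecs m. \<forall>y\<in>vecs m. Q (vadd x y) = (Q x \<noteq> Q y)"
  proof (intro ballI)
    fix x y assume "x \<in> vecs m" "y \<in> vecs m"
    then show "Q (vadd x y) = (Q x \<noteq> Q y)"
      using Suc.prems[rule_format, of "False#x" "False#y"] by (simp add: Q_def)
  qed
  from Suc.IH[OF this] obtain c' where c': "c' \<in> vecs m" "\<forall>x\<in>vecs m. Q x = dotp c' x" by blast
  define c0 where "c0 = P (True # replicate m False)"
  show ?case
  proof (intro bexI[of _ "c0 # c'"] ballI)
    fix x assume x: "x \<in> vecs (Suc m)"
    then obtain b x' where bx: "x = b # x'" "x' \<in> vecs m" by (auto simp: length_Suc_conv)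
    show "P x = dotp (c0 # c') x"
    proof (cases b)
      case False then show ?thesis using bx c' by (simp add: Q_def)
    next
      case True
      have "P (vadd (True # replicate m False) (False # x')) = (c0 \<noteq> Q x')"
        using Suc.prems[rule_format, of "True # replicate m False" "False # x'"] bx
        by (simp add: Q_def c0_def)
      then show ?thesis using bx c' True by (simp add: vadd_zero)
    qed
  qed (use c' in simp)
qed

lemma codim1_hom:
  assumes "codim1_subspace m H" "x \<in> vecs m" "y \<in> vecs m"
  shows "(vadd x y \<notin> H) = ((x \<notin> H) \<noteq> (y \<notin> H))"
proof -
  have sub: "H \<subseteq> vecs m" and cl: "\<And>x y. x \<in> H \<Longrightarrow> y \<in> H \<Longrightarrow> vadd x y \<in> H"
    and m1: "m \<ge> 1" and cH: "card H = 2^(m-1)"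
    using assms(1) by (auto simp: codim1_subspace_def lin_subspace_def)
  have len: "length x = m" "length y = m" using assms by auto
  have mixed: "vadd a b \<notin> H" if "a \<in> H" "b \<in> vecs m" "b \<notin> H" for a b
  proof
    assume "vadd a b \<in> H"
    then have "vadd a (vadd a b) \<in> H" using cl that by blast
    moreover have "length a = m" using that sub by auto
    ultimately show False using vadd_cancel[of a b] that by auto
  qed
  show ?thesis
  proof (cases "x \<in> H")
    case True
    then show ?thesis using cl mixed assms by (cases "y \<in> H") auto
  next
    case xn: False
    show ?thesis
    proof (cases "y \<in> H")
      case True
      then show ?thesis using mixed[of y x] xn assms vadd_comm[of x y] by auto
    next
      case yn: False
      let ?T = "vadd x"
      have inj: "inj_on ?T H"
      proof (rule inj_onI)
        fix a b assume "a \<in> H" "b \<in> H" "vadd x a = vadd x b"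
        then have "vadd x (vadd x a) = vadd x (vadd x b)" by simp
        then show "a = b" using \<open>a \<in> H\<close> \<open>b \<in> H\<close> sub len vadd_cancel by (metis in_mono mem_vecs)
      qed
      have img: "?T ` H \<subseteq> vecs m - H"
      proof
        fix z assume "z \<in> ?T ` H"
        then obtain a where a: "a \<in> H" "z = vadd x a" by auto
        have "vadd a x \<notin> H" using mixed[of a x] a assms xn by auto
        moreover have "length a = m" using a sub by auto
        ultimately show "z \<in> vecs m - H" using a len vadd_comm[of x a] by auto
      qed
      have "card (?T ` H) = 2^(m-1)" using card_image[OF inj] cH by simp
      moreover have "card (vecs m - H) = 2^(m-1)"
      proof -
        have "card (vecs m - H) = 2^m - 2^(m-1)" using card_Diff_subset[OF _ sub] cH card_vecs
          by (metis finite_subset finite_vecs sub)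
        also have "\<dots> = 2^(m-1)" using m1 by (cases m) auto
        finally show ?thesis .
      qed
      ultimately have "?T ` H = vecs m - H"
        using img by (intro card_subset_eq) auto
      then have "y \<in> ?T ` H" using yn assms by auto
      then obtain a where a: "a \<in> H" "y = vadd x a" by auto
      then have "vadd x y = a" using vadd_cancel[of x a] len sub by auto
      then show ?thesis using a xn yn by auto
    qed
  qed
qed

lemma codim1_char:
  assumes "codim1_subspace m H"
  shows "\<exists>c\<in>vecs m. \<forall>x\<in>vecs m. (x \<notin> H) = dotp c x"
  using char_exists[of m "\<lambda>x. x \<notin> H"] codim1_hom[OF assms] by blast



theorem mainTheorem4:
  fixes n m k :: nat and h g :: "bool list \<Rightarrow> bool" and H :: "bool list set"
    and W :: "bool list \<Rightarrow> bool list \<Rightarrow> int"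
  assumes "even n" "even m" "even k" "n = m + k"
    and "bent m h" "bent k g"
    and "codim1_subspace m H"
    and W_def: "\<And>\<alpha> \<beta>. W \<alpha> \<beta> =
        (if \<alpha> \<in> vecs k \<and> \<beta> \<in> H then sgn2 (g \<alpha> \<noteq> h \<beta>) * 2 ^ (n div 2)
         else if \<alpha> = replicate k False \<and> \<beta> \<in> vecs m - H then sgn2 (h \<beta>) * 2 ^ (m div 2 + k)
         else 0)"
  shows "(\<exists>f :: bool list \<Rightarrow> bool. \<forall>\<alpha>\<in>vecs k. \<forall>\<beta>\<in>vecs m. walsh n f (\<alpha> @ \<beta>) = W \<alpha> \<beta>)
    \<and> tds n {\<alpha> @ \<beta> | \<alpha> \<beta>. \<alpha> \<in> vecs k \<and> \<beta> \<in> H} (\<lambda>x. g (take k x) \<noteq> h (drop k x))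
           {replicate k False @ \<beta> | \<beta>. \<beta> \<in> vecs m - H} (\<lambda>x. h (drop k x))"
proof -
  from codim1_char[OF assms(7)] obtain c where c: "c \<in> vecs m" "\<forall>x\<in>vecs m. (x \<notin> H) = dotp c x" ..
  have sub: "H \<subseteq> vecs m" using assms(7) unfolding codim1_subspace_def lin_subspace_def by blast
  have finH: "finite H" by (rule finite_subset[OF sub finite_vecs])
  define M :: int where "M = 2^(m div 2)"
  have Mpos: "M > 0" unfolding M_def by simp
  define XH where "XH b = (\<Sum>\<beta>\<in>H. sgn2 (h \<beta> \<noteq> dotp b \<beta>))" for b
  define XHb where "XHb b = (\<Sum>\<beta>\<in>vecs m - H. sgn2 (h \<beta> \<noteq> dotp b \<beta>))" for b
  have K: "(XH b = 0 \<and> \<bar>XHb b\<bar> = M) \<or> (XHb b = 0 \<and> \<bar>XH b\<bar> = M)" if b: "b \<in> vecs m" for b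
  proof -
    have w1: "XH b + XHb b = walsh m h b"
      unfolding XH_def XHb_def walsh_def
      using sum.subset_diff[OF sub finite_vecs, of "\<lambda>\<beta>. sgn2 (h \<beta> \<noteq> dotp b \<beta>)"] by (simp only: add.commute)
    have w2: "XH b - XHb b = walsh m h (vadd b c)"
    proof -
      define G where "G \<beta> = (if \<beta> \<in> H then 1 else -1) * sgn2 (h \<beta> \<noteq> dotp b \<beta>)" for \<beta>
      have "walsh m h (vadd b c) = (\<Sum>\<beta>\<in>vecs m. G \<beta>)"
        unfolding walsh_def
      proof (rule sum.cong[OF refl])
        fix \<beta> assume \<beta>: "\<beta> \<in> vecs m"
        have "dotp (vadd b c) \<beta> = (dotp b \<beta> \<noteq> dotp c \<beta>)" using b c by (intro dotp_vadd) simp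
        moreover have "(\<beta> \<notin> H) = dotp c \<beta>" using c(2) \<beta> by blast
        ultimately show "sgn2 (h \<beta> \<noteq> dotp (vadd b c) \<beta>) = G \<beta>"
          unfolding G_def
          by (cases "h \<beta>"; cases "dotp b \<beta>"; cases "\<beta> \<in> H") (auto simp: sgn2_def)
      qed
      also have "\<dots> = (\<Sum>\<beta>\<in>vecs m - H. G \<beta>) + (\<Sum>\<beta>\<in>H. G \<beta>)"
        by (rule sum.subset_diff[OF sub finite_vecs])
      also have "(\<Sum>\<beta>\<in>H. G \<beta>) = XH b" unfolding XH_def G_def by (rule sum.cong) auto
      also have "(\<Sum>\<beta>\<in>vecs m - H. G \<beta>) = - XHb b" unfolding XHb_def G_def
        by (simp add: sum_negf[symmetric])
      finally show ?thesis by simp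
    qed
    have a1: "\<bar>walsh m h b\<bar> = M" using assms(5) b by (simp add: bent_def M_def)
    have a2: "\<bar>walsh m h (vadd b c)\<bar> = M" using assms(5) b c by (simp add: bent_def M_def)
    show ?thesis using w1 w2 a1 a2 Mpos by (auto simp: abs_if split: if_splits)
  qed
  have nk: "n = k + m" using assms(4) by simp
  have half: "n div 2 = m div 2 + k div 2" using assms(2,3,4) by (auto elim!: evenE)
  have wg: "\<bar>walsh k g a\<bar> = 2^(k div 2)" if "a \<in> vecs k" for a
    using assms(6) that by (simp add: bent_def)
  let ?z = "replicate k False"
  have decomp: "(\<Sum>\<nu>\<in>vecs n. W (take k \<nu>) (drop k \<nu>) * sgn2 (dotp \<nu> (a @ b)))
      = 2^(n div 2) * walsh k g a * XH b + 2^(m div 2 + k) * XHb b"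
    if a: "a \<in> vecs k" and b: "b \<in> vecs m" for a b
  proof -
    define T1 where "T1 \<alpha> \<beta> = (if \<beta> \<in> H then 2^(n div 2) * (sgn2 (g \<alpha> \<noteq> dotp a \<alpha>) * sgn2 (h \<beta> \<noteq> dotp b \<beta>)) else (0::int))" for \<alpha> \<beta>
    define T2 where "T2 \<alpha> \<beta> = (if \<alpha> = ?z then (if \<beta> \<in> vecs m - H then 2^(m div 2 + k) * sgn2 (h \<beta> \<noteq> dotp b \<beta>) else 0) else (0::int))" for \<alpha> \<beta>
    have "(\<Sum>\<nu>\<in>vecs n. W (take k \<nu>) (drop k \<nu>) * sgn2 (dotp \<nu> (a @ b)))
        = (\<Sum>\<alpha>\<in>vecs k. \<Sum>\<beta>\<in>vecs m. W \<alpha> \<beta> * sgn2 (dotp (\<alpha> @ \<beta>) (a @ b)))"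
      unfolding nk sum_vecs_append by simp
    also have "\<dots> = (\<Sum>\<alpha>\<in>vecs k. \<Sum>\<beta>\<in>vecs m. T1 \<alpha> \<beta> + T2 \<alpha> \<beta>)"
    proof (intro sum.cong refl)
      fix \<alpha> \<beta> assume \<alpha>: "\<alpha> \<in> vecs k" and \<beta>: "\<beta> \<in> vecs m"
      have d: "dotp (\<alpha> @ \<beta>) (a @ b) = (dotp a \<alpha> \<noteq> dotp b \<beta>)"
        using \<alpha> a dotp_append[of a \<alpha> \<beta> b] dotp_comm[of a \<alpha>] dotp_comm[of b \<beta>] by simp
      show "W \<alpha> \<beta> * sgn2 (dotp (\<alpha> @ \<beta>) (a @ b)) = T1 \<alpha> \<beta> + T2 \<alpha> \<beta>"
      proof (cases "\<beta> \<in> H")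
        case True
        then have "W \<alpha> \<beta> = sgn2 (g \<alpha> \<noteq> h \<beta>) * 2 ^ (n div 2)" using \<alpha> by (simp add: W_def)
        moreover have "T1 \<alpha> \<beta> = 2^(n div 2) * (sgn2 (g \<alpha> \<noteq> dotp a \<alpha>) * sgn2 (h \<beta> \<noteq> dotp b \<beta>))"
          using True by (simp add: T1_def)
        moreover have "T2 \<alpha> \<beta> = 0" using True by (simp add: T2_def)
        ultimately show ?thesis unfolding d by (simp only: sgn2_xor) (simp add: ac_simps)
      next
        case False
        have "T1 \<alpha> \<beta> = 0" using False by (simp add: T1_def)
        moreover have "W \<alpha> \<beta> = (if \<alpha> = ?z then sgn2 (h \<beta>) * 2 ^ (m div 2 + k) else 0)"
          using False \<alpha> \<beta> by (simp add: W_def)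
        moreover have "T2 \<alpha> \<beta> = (if \<alpha> = ?z then 2^(m div 2 + k) * sgn2 (h \<beta> \<noteq> dotp b \<beta>) else 0)"
          using False \<beta> by (simp add: T2_def)
        moreover have "\<alpha> = ?z \<Longrightarrow> dotp a \<alpha> = False" by simp
        ultimately show ?thesis unfolding d by (cases "\<alpha> = ?z") (simp_all only: sgn2_xor, simp_all add: sgn2_def ac_simps)
      qed
    qed
    also have "\<dots> = (\<Sum>\<alpha>\<in>vecs k. \<Sum>\<beta>\<in>vecs m. T1 \<alpha> \<beta>) + (\<Sum>\<alpha>\<in>vecs k. \<Sum>\<beta>\<in>vecs m. T2 \<alpha> \<beta>)"
      by (simp add: sum.distrib)
    also have "(\<Sum>\<alpha>\<in>vecs k. \<Sum>\<beta>\<in>vecs m. T1 \<alpha> \<beta>) = 2^(n div 2) * walsh k g a * XH b"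
    proof -
      have "(\<Sum>\<alpha>\<in>vecs k. \<Sum>\<beta>\<in>vecs m. T1 \<alpha> \<beta>)
          = (\<Sum>\<alpha>\<in>vecs k. \<Sum>\<beta>\<in>H. 2^(n div 2) * (sgn2 (g \<alpha> \<noteq> dotp a \<alpha>) * sgn2 (h \<beta> \<noteq> dotp b \<beta>)))"
        unfolding T1_def using sub by (simp add: sum.inter_restrict[symmetric] Int_absorb1)
      also have "\<dots> = 2^(n div 2) * ((\<Sum>\<alpha>\<in>vecs k. sgn2 (g \<alpha> \<noteq> dotp a \<alpha>)) * (\<Sum>\<beta>\<in>H. sgn2 (h \<beta> \<noteq> dotp b \<beta>)))"
        by (subst sum_product) (simp only: sum_distrib_left)
      finally show ?thesis by (simp add: walsh_def XH_def)
    qed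
    also have "(\<Sum>\<alpha>\<in>vecs k. \<Sum>\<beta>\<in>vecs m. T2 \<alpha> \<beta>) = 2^(m div 2 + k) * XHb b"
    proof -
      have "(\<Sum>\<alpha>\<in>vecs k. \<Sum>\<beta>\<in>vecs m. T2 \<alpha> \<beta>)
          = (\<Sum>\<alpha>\<in>vecs k. if \<alpha> = ?z then (\<Sum>\<beta>\<in>vecs m. if \<beta> \<in> vecs m - H then 2^(m div 2 + k) * sgn2 (h \<beta> \<noteq> dotp b \<beta>) else 0) else 0)"
        unfolding T2_def by (rule sum.cong) auto
      also have "\<dots> = (\<Sum>\<beta>\<in>vecs m. if \<beta> \<in> vecs m - H then 2^(m div 2 + k) * sgn2 (h \<beta> \<noteq> dotp b \<beta>) else 0)"
        by (simp add: sum.delta)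
      also have "\<dots> = (\<Sum>\<beta>\<in>vecs m - H. 2^(m div 2 + k) * sgn2 (h \<beta> \<noteq> dotp b \<beta>))"
        by (subst sum.inter_restrict[OF finite_vecs, symmetric]) (simp add: Int_absorb1 Diff_subset)
      finally show ?thesis by (simp add: XHb_def sum_distrib_left)
    qed
    finally show ?thesis .
  qed
  have absS: "\<bar>2^(n div 2) * walsh k g a * XH b + 2^(m div 2 + k) * XHb b\<bar> = 2^n"
    if a: "a \<in> vecs k" and b: "b \<in> vecs m" for a b
  proof -
    have ex1: "n div 2 + k div 2 + m div 2 = n" using half assms(1) by presburger
    have ex2: "m div 2 + k + m div 2 = n" using assms(2,4) by presburger
    have e1: "(2::int)^(n div 2) * 2^(k div 2) * M = 2^n"
      unfolding M_def by (simp only: power_add[symmetric] ex1)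
    have e2: "(2::int)^(m div 2 + k) * M = 2^n"
      unfolding M_def by (simp only: power_add[symmetric] ex2)
    from K[OF b] show ?thesis
    proof
      assume "XH b = 0 \<and> \<bar>XHb b\<bar> = M"
      then show ?thesis using e2 by (simp add: abs_mult)
    next
      assume "XHb b = 0 \<and> \<bar>XH b\<bar> = M"
      then show ?thesis using e1 wg[OF a] by (simp add: abs_mult)
    qed
  qed
  define F where "F \<nu> = W (take k \<nu>) (drop k \<nu>)" for \<nu>
  define f where "f x = ((\<Sum>\<nu>\<in>vecs n. F \<nu> * sgn2 (dotp \<nu> x)) < 0)" for x
  have inv: "(\<Sum>\<nu>\<in>vecs n. F \<nu> * sgn2 (dotp \<nu> x)) = 2^n * sgn2 (f x)" if x: "x \<in> vecs n" for x
  proof -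
    have ab: "take k x \<in> vecs k" "drop k x \<in> vecs m" and xe: "x = take k x @ drop k x"
      using x assms(4) by auto
    have "\<bar>\<Sum>\<nu>\<in>vecs n. F \<nu> * sgn2 (dotp \<nu> x)\<bar> = 2^n"
      using decomp[OF ab] absS[OF ab] xe unfolding F_def by metis
    then show ?thesis unfolding f_def sgn2_def by (auto simp: abs_if split: if_splits)
  qed
  have part1: "\<forall>\<alpha>\<in>vecs k. \<forall>\<beta>\<in>vecs m. walsh n f (\<alpha> @ \<beta>) = W \<alpha> \<beta>"
  proof (intro ballI)
    fix \<alpha> \<beta> assume "\<alpha> \<in> vecs k" "\<beta> \<in> vecs m"
    then have "\<alpha> @ \<beta> \<in> vecs n" using assms(4) by simp
    from walsh_inversion[of n F f, OF inv this] show "walsh n f (\<alpha> @ \<beta>) = W \<alpha> \<beta>"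
      using \<open>\<alpha> \<in> vecs k\<close> by (simp add: F_def)
  qed
  have S1e: "{\<alpha> @ \<beta> | \<alpha> \<beta>. \<alpha> \<in> vecs k \<and> \<beta> \<in> H} = (\<lambda>(a,b). a@b) ` (vecs k \<times> H)" by fastforce
  have S2e: "{?z @ \<beta> | \<beta>. \<beta> \<in> vecs m - H} = (\<lambda>b. ?z @ b) ` (vecs m - H)" by auto
  have X1: "Xsum ((\<lambda>(a,b). a@b) ` (vecs k \<times> H)) (\<lambda>x. g (take k x) \<noteq> h (drop k x)) (a @ b) = walsh k g a * XH b"
    if a: "a \<in> vecs k" and b: "b \<in> vecs m" for a b
  proof -
    have "Xsum ((\<lambda>(a,b). a@b) ` (vecs k \<times> H)) (\<lambda>x. g (take k x) \<noteq> h (drop k x)) (a @ b)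
       = (\<Sum>\<alpha>\<in>vecs k. \<Sum>\<beta>\<in>H. sgn2 ((g \<alpha> \<noteq> h \<beta>) \<noteq> dotp (a @ b) (\<alpha> @ \<beta>)))"
      unfolding Xsum_def by (subst sum.reindex[OF inj_append]) (simp add: sum.cartesian_product split_def, rule sum.cong, auto)
    also have "\<dots> = (\<Sum>\<alpha>\<in>vecs k. \<Sum>\<beta>\<in>H. sgn2 (g \<alpha> \<noteq> dotp a \<alpha>) * sgn2 (h \<beta> \<noteq> dotp b \<beta>))"
    proof (intro sum.cong refl)
      fix \<alpha> \<beta> assume \<alpha>: "\<alpha> \<in> vecs k"
      have d: "dotp (a @ b) (\<alpha> @ \<beta>) = (dotp a \<alpha> \<noteq> dotp b \<beta>)"
        using \<alpha> a by (intro dotp_append) simp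
      show "sgn2 ((g \<alpha> \<noteq> h \<beta>) \<noteq> dotp (a @ b) (\<alpha> @ \<beta>)) = sgn2 (g \<alpha> \<noteq> dotp a \<alpha>) * sgn2 (h \<beta> \<noteq> dotp b \<beta>)"
        unfolding d by (simp only: sgn2_xor) (simp add: ac_simps)
    qed
    also have "\<dots> = walsh k g a * XH b"
      unfolding walsh_def XH_def by (subst sum_product) (rule refl)
    finally show ?thesis .
  qed
  have X2: "Xsum ((\<lambda>b. ?z @ b) ` (vecs m - H)) (\<lambda>x. h (drop k x)) (a @ b) = XHb b"
    if a: "a \<in> vecs k" and b: "b \<in> vecs m" for a b
  proof -
    have inj: "inj_on (\<lambda>b. ?z @ b) (vecs m - H)" by (auto simp: inj_on_def)
    have "Xsum ((\<lambda>b. ?z @ b) ` (vecs m - H)) (\<lambda>x. h (drop k x)) (a @ b)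
       = (\<Sum>\<beta>\<in>vecs m - H. sgn2 (h \<beta> \<noteq> dotp (a @ b) (?z @ \<beta>)))"
      unfolding Xsum_def by (subst sum.reindex[OF inj]) simp
    also have "\<dots> = XHb b" unfolding XHb_def
    proof (intro sum.cong refl)
      fix \<beta>
      have "dotp (a @ b) (?z @ \<beta>) = (dotp a ?z \<noteq> dotp b \<beta>)"
        using a by (intro dotp_append) simp
      then show "sgn2 (h \<beta> \<noteq> dotp (a @ b) (?z @ \<beta>)) = sgn2 (h \<beta> \<noteq> dotp b \<beta>)" by simp
    qed
    finally show ?thesis .
  qed
  have part2: "tds n ((\<lambda>(a,b). a@b) ` (vecs k \<times> H)) (\<lambda>x. g (take k x) \<noteq> h (drop k x))
           ((\<lambda>b. ?z @ b) ` (vecs m - H)) (\<lambda>x. h (drop k x))"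
    unfolding tds_def
  proof (intro conjI ballI)
    show "(\<lambda>(a,b). a@b) ` (vecs k \<times> H) \<subseteq> vecs n" using sub assms(4) by auto
    show "(\<lambda>b. ?z @ b) ` (vecs m - H) \<subseteq> vecs n" using assms(4) by auto
    show "(\<lambda>(a,b). a@b) ` (vecs k \<times> H) \<inter> (\<lambda>b. ?z @ b) ` (vecs m - H) = {}"
      by auto
  next
    fix u assume u: "u \<in> vecs n"
    have ab: "take k u \<in> vecs k" "drop k u \<in> vecs m" and ue: "u = take k u @ drop k u"
      using u assms(4) by auto
    have x1: "Xsum ((\<lambda>(a,b). a@b) ` (vecs k \<times> H)) (\<lambda>x. g (take k x) \<noteq> h (drop k x)) u = walsh k g (take k u) * XH (drop k u)"
      using X1[OF ab] ue by metis
    have x2: "Xsum ((\<lambda>b. ?z @ b) ` (vecs m - H)) (\<lambda>x. h (drop k x)) u = XHb (drop k u)"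
      using X2[OF ab] ue by metis
    have wgp: "\<bar>walsh k g (take k u)\<bar> > 0" using wg[OF ab(1)] by simp
    show "Xsum ((\<lambda>(a,b). a@b) ` (vecs k \<times> H)) (\<lambda>x. g (take k x) \<noteq> h (drop k x)) u *
          Xsum ((\<lambda>b. ?z @ b) ` (vecs m - H)) (\<lambda>x. h (drop k x)) u = 0"
      unfolding x1 x2 using K[OF ab(2)] by auto
    show "0 < \<bar>Xsum ((\<lambda>(a,b). a@b) ` (vecs k \<times> H)) (\<lambda>x. g (take k x) \<noteq> h (drop k x)) u\<bar> +
          \<bar>Xsum ((\<lambda>b. ?z @ b) ` (vecs m - H)) (\<lambda>x. h (drop k x)) u\<bar>"
      unfolding x1 x2 using K[OF ab(2)] Mpos wgp by (auto simp: abs_mult)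
  qed
  show ?thesis using part1 part2 unfolding S1e S2e by blast
qed

end
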